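(* Every D-cube has property L.
   Context: For sets $U,V$ let $U\oplus V=(U\cup V)\setminus(U\cap V)$. An $n$-cube orientation is a directed graph $\mathcal{O}$ on the vertex set of all subsets of $[n]$ containing, for each vertex $V$ and $i\in[n]$, exactly one of the directed edges $(V,V\oplus\{i\})$, $(V\oplus\{i\},V)$; its outmap is $\phi(V)=\{i: (V,V\oplus\{i\})\in\mathcal{O}\}$, which determines $\mathcal{O}$. For a vertex $V$, the L-graph $\mathcal{L}_{\mathcal{O}}(V)$ has vertex set $[n]\setminus V$ and an arc $(i,j)$ for distinct $i,j\notin V$ whenever $j\in\phi(V)\oplus\phi(V\cup\{i\})$; $\mathcal{O}$ has property L if all its L-graphs are acyclic. Given $M\in\mathbb{R}^{n\times n}$ and $V\subseteq[n]$, let $M(V)$ be the $n\times n$ matrix whose $i$-th column is $-M_i$ (the negative of the $i$-th column of $M$) if $i\in V$ and the $i$-th unit vector $I_i$ if $i\notin V$. A D-cube is an $n$-cube orientation whose outmap is $\phi(V)=\{i\in[n]: (M(V)^{-1}\mathbf{q})_i<0\}$ for all $V\subseteq[n]$, where $M$ is a symmetric positive definite matrix and $\mathbf{q}\in\mathbb{R}^n$ is generic with respect to $M$, meaning that no entry of $M(V)^{-1}\mathbf{q}$ is zero for any $V\subseteq[n]$. (Such an orientation is a unique sink orientation: every face has exactly one sink.) *)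

theory Defs
  imports "HOL-Analysis.Analysis"
begin

text \<open>The ground set [n] is modelled by a finite type 'n (so [n] = UNIV :: 'n set),
  vertices of the n-cube are sets of type 'n set, and n x n matrices are real^'n^'n.\<close>

definition symdiff :: "'a set \<Rightarrow> 'a set \<Rightarrow> 'a set" where
  "symdiff U V = (U \<union> V) - (U \<inter> V)"

text \<open>An outmap of an n-cube orientation: for every vertex V and direction i exactly one
  of the edges (V, V xor {i}), (V xor {i}, V) is present.\<close>
definition cube_orientation_outmap :: "('n::finite set \<Rightarrow> 'n set) \<Rightarrow> bool" where
  "cube_orientation_outmap \<phi> \<longleftrightarrow>
     (\<forall>V i. i \<in> \<phi> V \<longleftrightarrow> i \<notin> \<phi> (symdiff V {i}))"

definition L_graph :: "('n::finite set \<Rightarrow> 'n set) \<Rightarrow> 'n set \<Rightarrow> ('n \<times> 'n) set" where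
  "L_graph \<phi> V = {(i, j). i \<notin> V \<and> j \<notin> V \<and> i \<noteq> j \<and> j \<in> symdiff (\<phi> V) (\<phi> (V \<union> {i}))}"

definition property_L :: "('n::finite set \<Rightarrow> 'n set) \<Rightarrow> bool" where
  "property_L \<phi> \<longleftrightarrow> (\<forall>V. acyclic (L_graph \<phi> V))"

definition sym_pos_def :: "real^'n^'n \<Rightarrow> bool" where
  "sym_pos_def M \<longleftrightarrow> transpose M = M \<and> (\<forall>x. x \<noteq> 0 \<longrightarrow> x \<bullet> (M *v x) > 0)"

definition Mat_V :: "real^'n^'n \<Rightarrow> 'n set \<Rightarrow> real^'n^'n" where
  "Mat_V M V = (\<chi> r c. if c \<in> V then - (M $ r $ c) else (if r = c then 1 else 0))"

definition generic_wrt :: "real^'n^'n \<Rightarrow> real^'n \<Rightarrow> bool" where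
  "generic_wrt M q \<longleftrightarrow> (\<forall>V i. (matrix_inv (Mat_V M V) *v q) $ i \<noteq> 0)"

definition D_outmap :: "real^'n^'n \<Rightarrow> real^'n \<Rightarrow> 'n set \<Rightarrow> 'n set" where
  "D_outmap M q V = {i. (matrix_inv (Mat_V M V) *v q) $ i < 0}"

definition D_cube :: "('n::finite set \<Rightarrow> 'n set) \<Rightarrow> bool" where
  "D_cube \<phi> \<longleftrightarrow> cube_orientation_outmap \<phi> \<and>
     (\<exists>M q. sym_pos_def M \<and> generic_wrt M q \<and> (\<forall>V. \<phi> V = D_outmap M q V))"

end

theory Submission
  imports Defs
begin

definition rst :: "'n::finite set \<Rightarrow> real^'n \<Rightarrow> real^'n" where
  "rst V x = (\<chi> c. if c \<in> V then x$c else 0)"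

definition wpt :: "'n::finite set \<Rightarrow> real^'n \<Rightarrow> real^'n" where
  "wpt V x = (\<chi> c. if c \<in> V then 0 else x$c)"

lemma matv_apply:
  fixes M :: "real^'n::finite^'n"
  shows "Mat_V M V *v x = wpt V x - M *v rst V x"
proof -
  have "(Mat_V M V *v x) $ r = (wpt V x - M *v rst V x) $ r" for r
  proof -
    have "(Mat_V M V *v x) $ r = (\<Sum>c\<in>UNIV. (if c \<in> V then - (M $ r $ c) * x$c else 0)
          + (if c \<notin> V \<and> r = c then x$c else 0))"
      unfolding Mat_V_def matrix_vector_mult_def
      by (simp, intro sum.cong) auto
    also have "\<dots> = (\<Sum>c\<in>UNIV. (if c \<in> V then - (M $ r $ c) * x$c else 0))
          + (\<Sum>c\<in>UNIV. (if c \<notin> V \<and> r = c then x$c else 0))"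
      by (rule sum.distrib)
    also have "(\<Sum>c\<in>UNIV. (if c \<notin> V \<and> r = c then x$c else 0)) = (wpt V x) $ r"
      unfolding wpt_def
      by (subst sum.cong[OF refl, where h="\<lambda>c. if c = r then (if r \<in> V then 0 else x$r) else 0"]) auto
    also have "(\<Sum>c\<in>UNIV. (if c \<in> V then - (M $ r $ c) * x$c else 0)) = - (M *v rst V x) $ r"
      unfolding rst_def matrix_vector_mult_def
      by (simp add: sum_negf[symmetric] if_distrib cong: if_cong)
    finally show ?thesis by simp
  qed
  then show ?thesis by (simp add: vec_eq_iff)
qed

lemma sym_inner:
  fixes M :: "real^'n::finite^'n"
  assumes "transpose M = M"
  shows "b \<bullet> (M *v a) = a \<bullet> (M *v b)"
proof -
  have "b \<bullet> (M *v a) = (a v* transpose M) \<bullet> b" by (simp add: inner_commute)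
  also have "\<dots> = a \<bullet> (transpose M *v b)" by (rule dot_lmul_matrix)
  finally show ?thesis using assms by simp
qed

lemma psd:
  fixes M :: "real^'n::finite^'n"
  assumes "sym_pos_def M"
  shows "0 \<le> v \<bullet> (M *v v)"
  using assms unfolding sym_pos_def_def
  by (cases "v = 0") (auto intro: less_imp_le)

lemma cs:
  fixes M :: "real^'n::finite^'n"
  assumes sp: "sym_pos_def M"
  shows "(a \<bullet> (M *v b))^2 \<le> (a \<bullet> (M *v a)) * (b \<bullet> (M *v b))"
proof (cases "b = 0")
  case True then show ?thesis by simp
next
  case False
  have sym: "transpose M = M" and pd: "\<And>x. x \<noteq> 0 \<Longrightarrow> x \<bullet> (M *v x) > 0"
    using sp unfolding sym_pos_def_def by auto
  define A where "A = a \<bullet> (M *v a)"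
  define B where "B = b \<bullet> (M *v b)"
  define C where "C = a \<bullet> (M *v b)"
  have Bp: "B > 0" using pd[OF False] B_def by simp
  have ba: "b \<bullet> (M *v a) = C" using sym_inner[OF sym, of b a] C_def by simp
  define v where "v = B *\<^sub>R a - C *\<^sub>R b"
  have "v \<bullet> (M *v v) = B*B*A - B*C*C - C*B*C + C*C*B"
    unfolding v_def
    by (simp add: algebra_simps inner_diff_left inner_diff_right ba flip: A_def B_def C_def)
  also have "\<dots> = B * (A*B - C^2)" by (simp add: algebra_simps power2_eq_square)
  finally have "0 \<le> B * (A*B - C^2)" using psd[OF sp, of v] by simp
  then have "0 \<le> A*B - C^2" using Bp by (simp add: zero_le_mult_iff)
  then show ?thesis unfolding A_def B_def C_def by simp
qed

lemma supp_inner: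
  fixes a b :: "real^'n::finite"
  assumes "\<And>c. c \<notin> insert k V \<Longrightarrow> a$c = 0" "\<And>c. c \<in> V \<Longrightarrow> b$c = 0"
  shows "a \<bullet> b = a$k * b$k"
proof -
  have "a \<bullet> b = (\<Sum>c\<in>UNIV. a$c * b$c)" by (simp add: inner_vec_def)
  also have "\<dots> = (\<Sum>c\<in>UNIV. if c = k then a$c * b$c else 0)"
    using assms by (intro sum.cong) auto
  also have "\<dots> = a$k * b$k" by simp
  finally show ?thesis .
qed

lemma matv_inj:
  fixes M :: "real^'n::finite^'n"
  assumes sp: "sym_pos_def M"
  shows "invertible (Mat_V M V)"
proof -
  have "x = 0" if h: "Mat_V M V *v x = 0" for x
  proof -
    have w: "wpt V x = M *v rst V x" using h matv_apply[of M V x] by simp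
    have "rst V x \<bullet> wpt V x = 0"
      by (rule trans[OF supp_inner[where a="rst V x" and V=V]]) (auto simp: rst_def wpt_def)
    then have "rst V x \<bullet> (M *v rst V x) = 0" using w by simp
    then have z: "rst V x = 0" using sp unfolding sym_pos_def_def by force
    then have "wpt V x = 0" using w by simp
    then show "x = 0" using z by (simp add: vec_eq_iff rst_def wpt_def) metis
  qed
  then show ?thesis
    using matrix_left_invertible_ker invertible_left_inverse by blast
qed

lemma inv_sol:
  fixes A :: "real^'n::finite^'n"
  assumes "invertible A"
  shows "A *v (matrix_inv A *v b) = b"
proof -
  have "A ** matrix_inv A = mat 1 \<and> matrix_inv A ** A = mat 1"
    using assms unfolding invertible_def matrix_inv_def by (rule someI_ex)
  then show ?thesis by (simp add: matrix_vector_mul_assoc)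
qed

lemma acyc_pot:
  assumes "r \<subseteq> {(a, b). (p b :: real) < p a}"
  shows "acyclic r"
proof -
  have "r\<^sup>+ \<subseteq> {(a, b). p b < p a}"
  proof (clarify)
    fix a b assume "(a, b) \<in> r\<^sup>+"
    then show "p b < p a"
      by (induct rule: trancl_induct) (use assms in force)+
  qed
  then show ?thesis unfolding acyclic_def by auto
qed

theorem theorem5p2:
  fixes \<phi> :: "'n::finite set \<Rightarrow> 'n set"
  assumes "D_cube \<phi>"
  shows "property_L \<phi>"
proof -
  obtain M q where sp: "sym_pos_def M" and gen: "generic_wrt M q"
    and ph: "\<And>V. \<phi> V = D_outmap M q V"
    using assms unfolding D_cube_def by blast
  have sym: "transpose M = M" and pd: "\<And>x. x \<noteq> 0 \<Longrightarrow> x \<bullet> (M *v x) > 0"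
    using sp unfolding sym_pos_def_def by auto
  define xs where "xs V = matrix_inv (Mat_V M V) *v q" for V
  define w where "w V = wpt V (xs V)" for V
  define z where "z V = rst V (xs V)" for V
  have wz: "w V = q + M *v z V" for V
    using inv_sol[OF matv_inj[OF sp, of V], of q] matv_apply[of M V "xs V"]
    unfolding w_def z_def xs_def[symmetric] by (simp add: algebra_simps)
  have w0: "c \<in> V \<Longrightarrow> w V $ c = 0" for V c by (simp add: w_def wpt_def)
  have z0: "c \<notin> V \<Longrightarrow> z V $ c = 0" for V c by (simp add: z_def rst_def)
  have xw: "c \<notin> V \<Longrightarrow> xs V $ c = w V $ c" for V c by (simp add: w_def wpt_def)
  have xnz: "xs V $ c \<noteq> 0" for V c using gen unfolding generic_wrt_def xs_def by blast
  have phx: "\<phi> V = {c. xs V $ c < 0}" for V using ph unfolding D_outmap_def xs_def by simp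
  show ?thesis unfolding property_L_def
  proof
    fix V
    define e where "e k = axis k 1 + rst V (matrix_inv (Mat_V M V) *v (M *v axis k 1))" for k
    have Me: "M *v e k = wpt V (matrix_inv (Mat_V M V) *v (M *v axis k 1))" for k
      using inv_sol[OF matv_inj[OF sp, of V], of "M *v axis k 1"]
        matv_apply[of M V "matrix_inv (Mat_V M V) *v (M *v axis k 1)"]
      unfolding e_def by (simp add: algebra_simps)
    have Me0: "c \<in> V \<Longrightarrow> (M *v e k) $ c = 0" for k c using Me by (simp add: wpt_def)
    have e0: "c \<notin> insert k V \<Longrightarrow> e k $ c = 0" for k c by (simp add: e_def rst_def axis_def)
    have e1: "k \<notin> V \<Longrightarrow> e k $ k = 1" for k by (simp add: e_def rst_def axis_def)
    define g where "g k = e k \<bullet> (M *v e k)" for k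
    have gpos: "k \<notin> V \<Longrightarrow> g k > 0" for k
    proof -
      assume "k \<notin> V"
      then have "e k \<noteq> 0" using e1[of k] by auto
      then show ?thesis using pd g_def by simp
    qed
    define p where "p k = (w V $ k)^2 / g k" for k
    show "acyclic (L_graph \<phi> V)"
    proof (rule acyc_pot[where p = p], clarify)
      fix i j assume "(i, j) \<in> L_graph \<phi> V"
      then have iV: "i \<notin> V" and jV: "j \<notin> V" and ij: "i \<noteq> j"
        and sd: "j \<in> symdiff (\<phi> V) (\<phi> (insert i V))"
        unfolding L_graph_def by auto
      define V' where "V' = insert i V"
      have jV': "j \<notin> V'" using jV ij V'_def by auto
      define d where "d = z V' - z V"
      have Md: "M *v d = w V' - w V" using wz[of V] wz[of V'] unfolding d_def
        by (simp add: algebra_simps)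
      have d0: "c \<notin> insert i V \<Longrightarrow> d $ c = 0" for c
        using z0[of c V] z0[of c V'] V'_def by (simp add: d_def)
      have Md0: "c \<in> V \<Longrightarrow> (M *v d) $ c = 0" for c
        using w0[of c V] w0[of c V'] V'_def Md by simp
      have Mdi: "(M *v d) $ i = - w V $ i"
        using w0[of i V'] V'_def Md by simp
      have Mdj: "(M *v d) $ j = w V' $ j - w V $ j" using Md by simp
      have h1: "e i \<bullet> (M *v d) = - w V $ i"
        using supp_inner[of i V "e i" "M *v d", OF e0 Md0] e1[OF iV] Mdi by simp
      have h2: "d \<bullet> (M *v e i) = d $ i * (M *v e i) $ i"
        using supp_inner[of i V d "M *v e i", OF d0 Me0] by simp
      have h3: "g i = (M *v e i) $ i"
        using supp_inner[of i V "e i" "M *v e i", OF e0 Me0] e1[OF iV] g_def by simp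
      have h4: "d \<bullet> (M *v d) = - d $ i * w V $ i"
        using supp_inner[of i V d "M *v d", OF d0 Md0] Mdi by simp
      have h5: "e j \<bullet> (M *v d) = w V' $ j - w V $ j"
        using supp_inner[of j V "e j" "M *v d", OF e0 Md0] e1[OF jV] Mdj by simp
      have sy: "e i \<bullet> (M *v d) = d \<bullet> (M *v e i)" using sym_inner[OF sym, of "e i" d] by simp
      have wi: "- w V $ i = d $ i * g i" using h1 h2 h3 sy by simp
      have cs1: "(w V' $ j - w V $ j)^2 \<le> g j * (- d $ i * w V $ i)"
        using cs[OF sp, of "e j" d] h5 h4 g_def by simp
      have gi: "g i > 0" using gpos iV by simp
      have gj: "g j > 0" using gpos jV by simp
      have a1: "xs V $ j = w V $ j" using xw jV by simp
      have a2: "xs V' $ j = w V' $ j" using xw jV' by simp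
      have nz1: "w V $ j \<noteq> 0" using xnz a1 by metis
      have nz2: "w V' $ j \<noteq> 0" using xnz a2 by metis
      have "(w V $ j < 0) \<noteq> (w V' $ j < 0)"
        using sd a1 a2 unfolding phx symdiff_def V'_def by auto
      then have neg: "w V $ j * w V' $ j < 0" using nz1 nz2
        by (auto simp: mult_less_0_iff)
      have "(w V $ j)^2 < (w V' $ j - w V $ j)^2"
      proof -
        have "0 \<le> w V' $ j * w V' $ j" by simp
        then show ?thesis using neg by (simp add: power2_diff power2_eq_square algebra_simps; linarith)
      qed
      also have "\<dots> \<le> g j * (d $ i * d $ i * g i)" using cs1 wi
        by (metis minus_mult_left mult.assoc mult.commute minus_minus)
      finally have lt: "(w V $ j)^2 < g j * (d $ i * d $ i * g i)" .
      have "p j = (w V $ j)^2 / g j" by (simp add: p_def)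
      also have "\<dots> < d $ i * d $ i * g i" using lt gj by (simp add: divide_less_eq mult.commute)
      also have "\<dots> = (w V $ i)^2 / g i"
      proof -
        have "w V $ i = - (d $ i * g i)" using wi by simp
        then show ?thesis using gi by (simp add: power2_eq_square field_simps)
      qed
      also have "\<dots> = p i" by (simp add: p_def)
      finally show "p j < p i" .
    qed
  qed
qed

end
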